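(* Let $\mathfrak{g}$ be a complex simply-laced symmetrizable Kac–Moody algebra with index set $I$ and Cartan matrix $(a_{i,j})$, and let $\lambda,\mu$ be dominant integral weights. Let $(i_1,\ldots,i_t)\in I^t$ with $i_p\ne i_q$ for $p\ne q$, and let $b_1,\ldots,b_t$ be nonnegative integers. Then $x=f_{i_1}^{b_1}\cdots f_{i_t}^{b_t}\pi_\lambda$ is nonzero and $\mu$-dominant if and only if \[ \lambda(\alpha_{i_t}^\vee)\ge b_t,\qquad \mu(\alpha_{i_1}^\vee)\ge b_1, \] \[ \mu(\alpha_{i_r}^\vee)\ge b_r+\sum_{s<r} b_s a_{i_s,i_r}\ \text{ for all }1<r\le t,\qquad \lambda(\alpha_{i_r}^\vee)\ge b_r+\sum_{s>r} b_s a_{i_s,i_r}\ \text{ for all }1\le r<t. \]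
   Context: Simply laced: $a_{i,i}=2$, $a_{i,j}\in\{0,-1\}$ for $i\ne j$. $B(\lambda)$ is Kashiwara's crystal of the irreducible integrable highest weight module $V(\lambda)$, with operators $e_i,f_i$ valued in $B(\lambda)\sqcup\{0\}$ and highest weight element $\pi_\lambda$; the monomial means $f_{i_t}^{b_t}$ is applied first. An element $\pi\in B(\lambda)$ is called $\mu$-dominant if $e_i^{\mu(\alpha_i^\vee)+1}\pi=0$ for all $i\in I$. *)

theory Defs
  imports Main "HOL-Analysis.Analysis"
begin

definition simply_laced :: "('i \<Rightarrow> 'i \<Rightarrow> int) \<Rightarrow> bool" where
  "simply_laced A \<longleftrightarrow> (\<forall>i. A i i = 2) \<and> (\<forall>i j. i \<noteq> j \<longrightarrow> A i j \<in> {0, -1}) \<and> (\<forall>i j. A i j = A j i)"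

definition dominant_integral :: "('i \<Rightarrow> 'v \<Rightarrow> real) \<Rightarrow> 'v \<Rightarrow> bool" where
  "dominant_integral coroot lam \<longleftrightarrow> (\<forall>i. coroot i lam \<in> \<nat>)"

definition sref :: "('i \<Rightarrow> 'v::real_vector) \<Rightarrow> ('i \<Rightarrow> 'v \<Rightarrow> real) \<Rightarrow> 'i \<Rightarrow> 'v \<Rightarrow> 'v" where
  "sref alpha coroot i v = v - coroot i v *\<^sub>R alpha i"

text \<open>Littelmann root operator f_i on paths [0,1] -> h*_R (None encodes 0).\<close>
definition froot :: "('i \<Rightarrow> 'v::real_vector) \<Rightarrow> ('i \<Rightarrow> 'v \<Rightarrow> real) \<Rightarrow> 'i \<Rightarrow> (real \<Rightarrow> 'v) \<Rightarrow> (real \<Rightarrow> 'v) option" where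
  "froot alpha coroot i \<pi> =
    (let h = (\<lambda>t. coroot i (\<pi> t)); m = Inf (h ` {0..1}) in
     if h 1 - m < 1 then None else
     (let P = Sup {t \<in> {0..1}. h t = m}; x = Inf {t \<in> {P..1}. h t = m + 1} in
      Some (\<lambda>t. if t \<le> P then \<pi> t
                else if t \<le> x then \<pi> P + sref alpha coroot i (\<pi> t - \<pi> P)
                else \<pi> t - alpha i)))"

text \<open>Littelmann root operator e_i on paths (None encodes 0).\<close>
definition eroot :: "('i \<Rightarrow> 'v::real_vector) \<Rightarrow> ('i \<Rightarrow> 'v \<Rightarrow> real) \<Rightarrow> 'i \<Rightarrow> (real \<Rightarrow> 'v) \<Rightarrow> (real \<Rightarrow> 'v) option" where
  "eroot alpha coroot i \<pi> =
    (let h = (\<lambda>t. coroot i (\<pi> t)); m = Inf (h ` {0..1}) in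
     if m > -1 then None else
     (let Q = Inf {t \<in> {0..1}. h t = m}; y = Sup {t \<in> {0..Q}. h t = m + 1} in
      Some (\<lambda>t. if t \<le> y then \<pi> t
                else if t \<le> Q then \<pi> y + sref alpha coroot i (\<pi> t - \<pi> y)
                else \<pi> t + alpha i)))"

definition fop where "fop alpha coroot i x = Option.bind x (froot alpha coroot i)"
definition eop where "eop alpha coroot i x = Option.bind x (eroot alpha coroot i)"

definition pi_hw :: "'v::real_vector \<Rightarrow> real \<Rightarrow> 'v" where
  "pi_hw lam = (\<lambda>t. t *\<^sub>R lam)"

text \<open>The monomial f_{i_1}^{b_1} ... f_{i_t}^{b_t} pi_lambda (f_{i_t}^{b_t} applied first).\<close>
definition monomial where
  "monomial alpha coroot ii b t lam =
     foldr (\<lambda>r acc. (fop alpha coroot (ii r) ^^ b r) acc) [1..<Suc t] (Some (pi_hw lam))"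

definition mu_dominant where
  "mu_dominant alpha coroot mu x \<longleftrightarrow>
     (\<forall>i. (eop alpha coroot i ^^ (nat \<lfloor>coroot i mu\<rfloor> + 1)) x = None)"

end

theory Submission
  imports Defs
begin

lemma lin_diff: "linear f \<Longrightarrow> f (x - y) = f x - (f y::real)" by (simp add: linear_diff)
lemma lin_scale: "linear f \<Longrightarrow> f (c *\<^sub>R x) = c * (f x::real)" by (simp add: linear_scale)
lemma lin_add: "linear f \<Longrightarrow> f (x + y) = f x + (f y::real)" by (simp add: linear_add)
lemma lin_sum: "linear f \<Longrightarrow> f (sum g S) = (\<Sum>s\<in>S. (f (g s)::real))" by (simp add: linear_sum)

lemma fop_None_pow: "(fop alpha coroot j ^^ k) None = None"
  by (induction k) (auto simp: fop_def)
lemma eop_None_pow: "(eop alpha coroot j ^^ k) None = None"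
  by (induction k) (auto simp: eop_def)

lemma froot_None: "Inf ((\<lambda>t. coroot i (\<pi> t)) ` {0..1}) = m \<Longrightarrow> coroot i (\<pi> 1) - m < 1 \<Longrightarrow> froot alpha coroot i \<pi> = None"
  by (simp add: froot_def Let_def)
lemma froot_Some:
  assumes "Inf ((\<lambda>t. coroot i (\<pi> t)) ` {0..1}) = m" "\<not> coroot i (\<pi> 1) - m < 1"
    "Sup {t \<in> {0..1}. coroot i (\<pi> t) = m} = P" "Inf {t \<in> {P..1}. coroot i (\<pi> t) = m + 1} = x"
  shows "froot alpha coroot i \<pi> = Some (\<lambda>t. if t \<le> P then \<pi> t
                else if t \<le> x then \<pi> P + sref alpha coroot i (\<pi> t - \<pi> P)
                else \<pi> t - alpha i)"
  unfolding froot_def Let_def assms(1) using assms(2) by (simp only: if_False assms(3,4))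
lemma eroot_None: "Inf ((\<lambda>t. coroot i (\<pi> t)) ` {0..1}) = m \<Longrightarrow> m > -1 \<Longrightarrow> eroot alpha coroot i \<pi> = None"
  by (simp add: eroot_def Let_def)
lemma eroot_Some:
  assumes "Inf ((\<lambda>t. coroot i (\<pi> t)) ` {0..1}) = m" "\<not> m > -1"
    "Inf {t \<in> {0..1}. coroot i (\<pi> t) = m} = Q" "Sup {t \<in> {0..Q}. coroot i (\<pi> t) = m + 1} = y"
  shows "eroot alpha coroot i \<pi> = Some (\<lambda>t. if t \<le> y then \<pi> t
                else if t \<le> Q then \<pi> y + sref alpha coroot i (\<pi> t - \<pi> y)
                else \<pi> t + alpha i)"
  unfolding eroot_def Let_def assms(1) using assms(2) by (simp only: if_False assms(3,4))

lemma f_step: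
  fixes p :: "real \<Rightarrow> 'v::real_vector"
  assumes lin: "linear (coroot j)" and aj: "coroot j (alpha j) = 2"
    and mono: "mono (\<lambda>\<tau>. coroot j (p \<tau>))" and cont: "continuous_on {0..1} (\<lambda>\<tau>. coroot j (p \<tau>))"
    and h0: "coroot j (p 0) = 0"
  shows "(fop alpha coroot j ^^ k) (Some p) = (if real k \<le> coroot j (p 1)
      then Some (\<lambda>\<tau>. p \<tau> - min (max (coroot j (p \<tau>)) 0) (real k) *\<^sub>R alpha j) else None)"
proof (induction k)
  case 0
  have "coroot j (p 0) \<le> coroot j (p 1)" using monoD[OF mono, of 0 1] by simp
  then show ?case using h0 by simp
next
  case (Suc k)
  define h where "h = (\<lambda>\<tau>. coroot j (p \<tau>))"
  have hmono: "\<And>x y. x \<le> y \<Longrightarrow> h x \<le> h y" using monoD[OF mono] unfolding h_def by simp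
  have hcont: "continuous_on {0..1} h" using cont unfolding h_def by simp
  have hnn: "0 \<le> h \<tau>" if "0 \<le> \<tau>" for \<tau> using that hmono[of 0 \<tau>] h0 unfolding h_def by simp
  show ?case
  proof (cases "real k \<le> h 1")
    case False
    then show ?thesis using Suc by (simp add: h_def fop_def fop_None_pow)
  next
    case True
    define pk where "pk = (\<lambda>\<tau>. p \<tau> - min (max (h \<tau>) 0) (real k) *\<^sub>R alpha j)"
    have IH: "(fop alpha coroot j ^^ k) (Some p) = Some pk" using Suc True by (simp add: pk_def h_def)
    define hk where "hk = (\<lambda>\<tau>. coroot j (pk \<tau>))"
    have hk: "hk \<tau> = h \<tau> - 2 * min (max (h \<tau>) 0) (real k)" for \<tau>
      unfolding hk_def pk_def h_def using lin aj by (simp add: lin_diff lin_scale)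
    obtain \<tau>0 where t0: "0 \<le> \<tau>0" "\<tau>0 \<le> 1" "h \<tau>0 = real k"
      using IVT'[of h 0 "real k" 1] hcont True h0 unfolding h_def by auto
    have lb: "\<And>\<tau>. \<tau> \<in> {0..1} \<Longrightarrow> - real k \<le> hk \<tau>" using hnn by (auto simp: hk)
    have minv: "Inf (hk ` {0..1}) = - real k"
    proof (rule cInf_eq_minimum)
      show "- real k \<in> hk ` {0..1}" using t0 by (intro image_eqI[of _ _ \<tau>0]) (auto simp: hk)
    qed (use lb in auto)
    have hk1: "hk 1 = h 1 - 2 * real k" using True hnn[of 1] by (simp add: hk)
    have Sset: "{\<tau> \<in> {0..1}. hk \<tau> = - real k} = {\<tau> \<in> {0..1}. h \<tau> = real k}"
    proof -
      have "hk \<tau> = - real k \<longleftrightarrow> h \<tau> = real k" if "\<tau> \<in> {0..1}" for \<tau>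
        using hnn[of \<tau>] that unfolding hk by (cases "h \<tau> \<le> real k") auto
      then show ?thesis by blast
    qed
    define P where "P = Sup {\<tau> \<in> {0..1}. h \<tau> = real k}"
    have bddP: "bdd_above {\<tau> \<in> {0..1}. h \<tau> = real k}" by (rule bdd_aboveI[of _ 1]) auto
    have neP: "{\<tau> \<in> {0..1}. h \<tau> = real k} \<noteq> {}" using t0 by auto
    have clP: "closed {\<tau> \<in> {0..1}. h \<tau> = real k}"
      by (rule continuous_closed_preimage_constant[OF hcont]) simp
    have Pin: "P \<in> {\<tau> \<in> {0..1}. h \<tau> = real k}"
      unfolding P_def by (rule closed_contains_Sup[OF neP bddP clP])
    have Pge: "\<tau> \<le> P" if "\<tau> \<in> {0..1}" "h \<tau> = real k" for \<tau>
      unfolding P_def by (rule cSup_upper[OF _ bddP]) (use that in auto)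
    have step: "(fop alpha coroot j ^^ Suc k) (Some p) = froot alpha coroot j pk"
      using IH by (simp add: fop_def[of alpha coroot j "Some pk"])
    show ?thesis
    proof (cases "h 1 < real k + 1")
      case True
      have "froot alpha coroot j pk = None"
        by (rule froot_None[where coroot=coroot and i=j and \<pi>=pk, OF minv[unfolded hk_def]]) (use True hk1 in \<open>simp add: hk_def\<close>)
      then show ?thesis using step True by (simp add: h_def)
    next
      case False
      have Xset: "{\<tau> \<in> {P..1}. hk \<tau> = - real k + 1} = {\<tau> \<in> {P..1}. h \<tau> = real k + 1}"
      proof -
        have "hk \<tau> = - real k + 1 \<longleftrightarrow> h \<tau> = real k + 1" if "\<tau> \<in> {P..1}" for \<tau>
        proof -
          have "real k \<le> h \<tau>" using hmono[of P \<tau>] that Pin by auto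
          then show ?thesis unfolding hk by auto
        qed
        then show ?thesis by blast
      qed
      define x where "x = Inf {\<tau> \<in> {P..1}. h \<tau> = real k + 1}"
      obtain \<tau>1 where t1: "P \<le> \<tau>1" "\<tau>1 \<le> 1" "h \<tau>1 = real k + 1"
        using IVT'[of h P "real k + 1" 1] False Pin continuous_on_subset[OF hcont, of "{P..1}"] by fastforce
      have neX: "{\<tau> \<in> {P..1}. h \<tau> = real k + 1} \<noteq> {}" using t1 by auto
      have bddX: "bdd_below {\<tau> \<in> {P..1}. h \<tau> = real k + 1}" by (rule bdd_belowI[of _ P]) auto
      have cP: "continuous_on {P..1} h" using continuous_on_subset[OF hcont, of "{P..1}"] Pin by auto
      have clX: "closed {\<tau> \<in> {P..1}. h \<tau> = real k + 1}"
        by (rule continuous_closed_preimage_constant[OF cP]) simp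
      have xin: "x \<in> {\<tau> \<in> {P..1}. h \<tau> = real k + 1}"
        unfolding x_def by (rule closed_contains_Inf[OF neX bddX clX])
      have res: "froot alpha coroot j pk = Some (\<lambda>\<tau>. if \<tau> \<le> P then pk \<tau>
                else if \<tau> \<le> x then pk P + sref alpha coroot j (pk \<tau> - pk P)
                else pk \<tau> - alpha j)"
        apply (rule froot_Some[where coroot=coroot and i=j and \<pi>=pk, OF minv[unfolded hk_def]])
        using False hk1 apply (simp add: hk_def)
        using Sset P_def apply (simp add: hk_def)
        using Xset x_def by (simp add: hk_def)
      have eq: "(if \<tau> \<le> P then pk \<tau>
                else if \<tau> \<le> x then pk P + sref alpha coroot j (pk \<tau> - pk P)
                else pk \<tau> - alpha j) = p \<tau> - min (max (h \<tau>) 0) (real (Suc k)) *\<^sub>R alpha j" for \<tau>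
      proof -
        consider "\<tau> \<le> P" | "P < \<tau>" "\<tau> \<le> x" | "x < \<tau>" by linarith
        then show ?thesis
        proof cases
          case 1
          then have "h \<tau> \<le> real k" using hmono[OF 1] Pin by simp
          then show ?thesis using 1 by (simp add: pk_def min_def max_def)
        next
          case 2
          have a: "real k \<le> h \<tau>" using hmono[of P \<tau>] 2 Pin by simp
          have b: "h \<tau> \<le> real k + 1" using hmono[of \<tau> x] 2 xin by simp
          have "pk P + sref alpha coroot j (pk \<tau> - pk P) = pk \<tau> - (hk \<tau> - hk P) *\<^sub>R alpha j"
            unfolding sref_def hk_def using lin by (simp add: lin_diff algebra_simps)
          also have "hk \<tau> - hk P = h \<tau> - real k" using a Pin by (simp add: hk)
          finally show ?thesis using 2 a b by (simp add: pk_def algebra_simps)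
        next
          case 3
          have a: "real k + 1 \<le> h \<tau>" using hmono[of x \<tau>] 3 xin by simp
          then show ?thesis using 3 xin Pin by (simp add: pk_def algebra_simps)
        qed
      qed
      show ?thesis using step res eq False by (simp add: h_def)
    qed
  qed
qed

definition propR :: "(real \<Rightarrow> real) \<Rightarrow> bool" where
 "propR F \<longleftrightarrow> (\<forall>t\<in>{0..1}. \<forall>k::int. (\<forall>s\<in>{0..t}. F s > of_int k - 1) \<longrightarrow> (\<exists>s\<in>{0..t}. F s < of_int k) \<longrightarrow> F t < of_int k)"

lemma cont_cases_le_id:
  assumes "continuous_on {x\<in>S. x \<le> a} f" "continuous_on {x\<in>S. a \<le> x} g" "\<And>x. x\<in>S \<Longrightarrow> x = a \<Longrightarrow> f x = g x"
  shows "continuous_on S (\<lambda>x::real. if x \<le> a then f x else (g x::real))"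
  using continuous_on_cases_le[of S "\<lambda>x. x" a f g] continuous_on_id assms by simp

lemma e_iter:
  fixes p :: "real \<Rightarrow> 'v::real_vector"
  assumes lin: "linear (coroot j)" and aj: "coroot j (alpha j) = 2"
    and cont: "continuous_on {0..1} (\<lambda>\<tau>. coroot j (p \<tau>))" and h0: "coroot j (p 0) = 0"
    and lb: "\<forall>\<tau>\<in>{0..1}. of_int m \<le> coroot j (p \<tau>)" and att: "\<exists>\<tau>\<in>{0..1}. coroot j (p \<tau>) = of_int m"
    and pr: "propR (\<lambda>\<tau>. coroot j (p \<tau>))"
  shows "(eop alpha coroot j ^^ n) (Some p) = None \<longleftrightarrow> int n > - m"
  using cont h0 lb att pr
proof (induction n arbitrary: p m)
  case 0
  have "of_int m \<le> coroot j (p 0)" using "0"(3) by simp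
  then have "of_int m \<le> (0::real)" using "0"(2) by simp
  then show ?case by simp
next
  case (Suc n)
  define F where "F = (\<lambda>\<tau>. coroot j (p \<tau>))"
  have Fc: "continuous_on {0..1} F" and F0: "F 0 = 0" and Flb: "\<And>\<tau>. \<tau> \<in> {0..1} \<Longrightarrow> of_int m \<le> F \<tau>"
    and Fpr: "propR F" using Suc.prems unfolding F_def by auto
  obtain \<tau>m where tm: "\<tau>m \<in> {0..1}" "F \<tau>m = of_int m" using Suc.prems unfolding F_def by auto
  have mle: "m \<le> 0" using Flb[of 0] F0 by simp
  have minv: "Inf (F ` {0..1}) = of_int m"
  proof (rule cInf_eq_minimum)
    show "of_int m \<in> F ` {0..1}" using tm by (intro image_eqI[of _ _ \<tau>m]) auto
  qed (use Flb in auto)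
  have step: "(eop alpha coroot j ^^ Suc n) (Some p) = (eop alpha coroot j ^^ n) (eroot alpha coroot j p)"
    by (simp add: funpow_Suc_right eop_def del: funpow.simps)
  show ?case
  proof (cases "of_int m > (-1::real)")
    case True
    have "eroot alpha coroot j p = None"
      by (rule eroot_None[where coroot=coroot and i=j and \<pi>=p, OF minv[unfolded F_def] True])
    then show ?thesis using step True mle by (simp add: eop_None_pow)
  next
    case False
    then have mle1: "m \<le> -1" by simp
    define Q where "Q = Inf {\<tau> \<in> {0..1}. F \<tau> = of_int m}"
    have neQ: "{\<tau> \<in> {0..1}. F \<tau> = of_int m} \<noteq> {}" using tm by auto
    have bddQ: "bdd_below {\<tau> \<in> {0..1}. F \<tau> = of_int m}" by (rule bdd_belowI[of _ 0]) auto
    have clQ: "closed {\<tau> \<in> {0..1}. F \<tau> = of_int m}"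
      by (rule continuous_closed_preimage_constant[OF Fc]) simp
    have Qin: "Q \<in> {\<tau> \<in> {0..1}. F \<tau> = of_int m}"
      unfolding Q_def by (rule closed_contains_Inf[OF neQ bddQ clQ])
    have Qle: "Q \<le> \<tau>" if "\<tau> \<in> {0..1}" "F \<tau> = of_int m" for \<tau>
      unfolding Q_def by (rule cInf_lower[OF _ bddQ]) (use that in auto)
    have cQ: "continuous_on {0..Q} F" using continuous_on_subset[OF Fc, of "{0..Q}"] Qin by auto
    have i1: "F Q \<le> of_int m + 1" using Qin by simp
    have i2: "of_int m + 1 \<le> F 0" using F0 mle1 by simp
    have i3: "0 \<le> Q" using Qin by simp
    from IVT2'[of F Q "of_int m + 1" 0, OF i1 i2 i3 cQ]
    obtain \<tau>1 where t1: "0 \<le> \<tau>1" "\<tau>1 \<le> Q" "F \<tau>1 = of_int m + 1" by blast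
    define y where "y = Sup {\<tau> \<in> {0..Q}. F \<tau> = of_int m + 1}"
    have neY: "{\<tau> \<in> {0..Q}. F \<tau> = of_int m + 1} \<noteq> {}" using t1 by auto
    have bddY: "bdd_above {\<tau> \<in> {0..Q}. F \<tau> = of_int m + 1}" by (rule bdd_aboveI[of _ Q]) auto
    have clY: "closed {\<tau> \<in> {0..Q}. F \<tau> = of_int m + 1}"
      by (rule continuous_closed_preimage_constant[OF cQ]) simp
    have yin: "y \<in> {\<tau> \<in> {0..Q}. F \<tau> = of_int m + 1}"
      unfolding y_def by (rule closed_contains_Sup[OF neY bddY clY])
    have yge: "\<tau> \<le> y" if "\<tau> \<in> {0..Q}" "F \<tau> = of_int m + 1" for \<tau>
      unfolding y_def by (rule cSup_upper[OF _ bddY]) (use that in auto)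
    have Q1: "Q \<le> 1" using Qin by auto
    have yQ: "y < Q" using yin Qin by (cases "y = Q") auto
    have A: "of_int m + 1 \<le> F s" if "s \<in> {0..y}" for s
    proof (rule ccontr)
      assume neg: "\<not> of_int m + 1 \<le> F s"
      have "\<forall>s'\<in>{0..y}. F s' > of_int (m + 1) - 1"
      proof
        fix s' assume s': "s' \<in> {0..y}"
        have s01: "s' \<in> {0..1}" using s' yQ Q1 by auto
        have "F s' \<noteq> of_int m"
        proof
          assume "F s' = of_int m"
          then have "Q \<le> s'" using Qle[OF s01] by simp
          then show False using s' yQ by auto
        qed
        then show "F s' > of_int (m + 1) - 1" using Flb[OF s01] by simp
      qed
      moreover have "\<exists>s\<in>{0..y}. F s < of_int (m + 1)" using neg that by (intro bexI[of _ s]) auto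
      moreover have y01: "y \<in> {0..1}" using yin Q1 by auto
      have "\<forall>k::int. (\<forall>s\<in>{0..y}. F s > of_int k - 1) \<longrightarrow> (\<exists>s\<in>{0..y}. F s < of_int k) \<longrightarrow> F y < of_int k"
        using Fpr y01 unfolding propR_def by blast
      ultimately have "F y < of_int (m + 1)" by blast
      then show False using yin by simp
    qed
    have B: "F s \<le> of_int m + 1" if "y < s" "s \<le> Q" for s
    proof (rule ccontr)
      assume neg: "\<not> F s \<le> of_int m + 1"
      have cs: "continuous_on {s..Q} F" using continuous_on_subset[OF Fc, of "{s..Q}"] Qin that yin by auto
      have i1: "F Q \<le> of_int m + 1" using Qin by simp
      have i2: "of_int m + 1 \<le> F s" using neg by simp
      from IVT2'[of F Q "of_int m + 1" s, OF i1 i2 that(2) cs]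
      obtain z where z: "s \<le> z" "z \<le> Q" "F z = of_int m + 1" by blast
      have "z \<in> {0..Q}" using z that yin by auto
      then have "z \<le> y" using yge z by blast
      then show False using \<open>s \<le> z\<close> that by simp
    qed
    define p' where "p' = (\<lambda>t. if t \<le> y then p t
                else if t \<le> Q then p y + sref alpha coroot j (p t - p y)
                else p t + alpha j)"
    have res: "eroot alpha coroot j p = Some p'"
      unfolding p'_def
      apply (rule eroot_Some[where coroot=coroot and i=j and \<pi>=p, OF minv[unfolded F_def] False])
      using Q_def apply (simp add: F_def)
      using y_def by (simp add: F_def)
    define F' where "F' = (\<lambda>t. if t \<le> y then F t else if t \<le> Q then 2 * (of_int m + 1) - F t else F t + 2)"
    have F'eq: "coroot j (p' t) = F' t" for t
    proof -
      have "coroot j (p y + sref alpha coroot j (p t - p y)) = 2 * F y - F t"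
        unfolding sref_def F_def using lin aj by (simp add: lin_diff lin_add lin_scale algebra_simps)
      then show ?thesis unfolding p'_def F'_def using yin lin aj by (simp add: lin_add F_def)
    qed
    have F'c: "continuous_on {0..1} F'"
      unfolding F'_def
    proof (rule cont_cases_le_id)
      show "continuous_on {x \<in> {0..1}. x \<le> y} F" by (rule continuous_on_subset[OF Fc]) auto
      show "continuous_on {x \<in> {0..1}. y \<le> x}
              (\<lambda>t. if t \<le> Q then 2 * (of_int m + 1) - F t else F t + 2)"
      proof (rule cont_cases_le_id)
        have "continuous_on {x \<in> {x \<in> {0..1}. y \<le> x}. x \<le> Q} F" by (rule continuous_on_subset[OF Fc]) auto
        then show "continuous_on {x \<in> {x \<in> {0..1}. y \<le> x}. x \<le> Q} (\<lambda>t. 2 * (of_int m + 1) - F t)"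
          by (intro continuous_intros)
        have "continuous_on {x \<in> {x \<in> {0..1}. y \<le> x}. Q \<le> x} F" by (rule continuous_on_subset[OF Fc]) auto
        then show "continuous_on {x \<in> {x \<in> {0..1}. y \<le> x}. Q \<le> x} (\<lambda>t. F t + 2)"
          by (intro continuous_intros)
        show "\<And>x. x \<in> {x \<in> {0..1}. y \<le> x} \<Longrightarrow> x = Q \<Longrightarrow> 2 * (of_int m + 1) - F x = F x + 2"
          using Qin by simp
      qed
      show "\<And>x. x \<in> {0..1} \<Longrightarrow> x = y \<Longrightarrow> F x = (if x \<le> Q then 2 * (of_int m + 1) - F x else F x + 2)"
        using yin by simp
    qed
    have F'lb: "of_int (m + 1) \<le> F' t" if "t \<in> {0..1}" for t
    proof -
      consider "t \<le> y" | "y < t" "t \<le> Q" | "Q < t" by linarith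
      then show ?thesis
      proof cases
        case 1 then show ?thesis using A[of t] that by (simp add: F'_def)
      next
        case 2 then show ?thesis using B[of t] yQ by (simp add: F'_def)
      next
        case 3 then show ?thesis using Flb[of t] that yQ by (simp add: F'_def)
      qed
    qed
    have F'y: "F' y = of_int (m + 1)" using yin by (simp add: F'_def)
    have F'0: "F' 0 = 0" using yin F0 by (simp add: F'_def)
    have F'pr: "propR F'"
      unfolding propR_def
    proof (intro ballI allI impI)
      fix t k assume t: "t \<in> {0..1}" and h1: "\<forall>s\<in>{0..t}. of_int k - 1 < F' s" and h2: "\<exists>s\<in>{0..t}. F' s < of_int k"
      show "F' t < of_int k"
      proof (cases "t \<le> y")
        case True
        have h1': "\<forall>s\<in>{0..t}. of_int k - 1 < F s" using h1 True by (auto simp: F'_def)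
        have h2': "\<exists>s\<in>{0..t}. F s < of_int k" using h2 True by (auto simp: F'_def)
        have "F t < of_int k" using Fpr t h1' h2' unfolding propR_def by blast
        then show ?thesis using True by (simp add: F'_def)
      next
        case False
        have "of_int k - 1 < F' y" using h1 False yin by auto
        then have "k \<le> m + 1" using F'y by simp
        moreover obtain s where "s \<in> {0..t}" "F' s < of_int k" using h2 by blast
        moreover have "of_int (m + 1) \<le> F' s" using F'lb[of s] \<open>s \<in> {0..t}\<close> t by auto
        ultimately show ?thesis by linarith
      qed
    qed
    have IH: "(eop alpha coroot j ^^ n) (Some p') = None \<longleftrightarrow> int n > - (m + 1)"
    proof (rule Suc.IH)
      show "continuous_on {0..1} (\<lambda>\<tau>. coroot j (p' \<tau>))" using F'c by (simp add: F'eq)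
      show "coroot j (p' 0) = 0" using F'0 by (simp add: F'eq)
      show "\<forall>\<tau>\<in>{0..1}. of_int (m + 1) \<le> coroot j (p' \<tau>)" using F'lb by (simp add: F'eq)
      show "\<exists>\<tau>\<in>{0..1}. coroot j (p' \<tau>) = of_int (m + 1)" using F'y yin Q1 by (auto simp: F'eq)
      show "propR (\<lambda>\<tau>. coroot j (p' \<tau>))" using F'pr by (simp add: F'eq)
    qed
    have e: "(eop alpha coroot j ^^ Suc n) (Some p) = (eop alpha coroot j ^^ n) (Some p')" using step res by simp
    show ?thesis unfolding e IH by auto
  qed
qed

lemma sum_min_ge:
  fixes bs :: "'a \<Rightarrow> real"
  assumes "finite N" "0 \<le> x" "\<forall>s\<in>N. 0 \<le> bs s"
  shows "min x (sum bs N) \<le> (\<Sum>s\<in>N. min x (bs s))"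
  using assms
proof (induction N rule: finite_induct)
  case empty then show ?case by simp
next
  case (insert a N)
  have IH: "min x (sum bs N) \<le> (\<Sum>s\<in>N. min x (bs s))" using insert by simp
  have nn: "0 \<le> sum bs N" using insert by (simp add: sum_nonneg)
  have "min x (sum bs (insert a N)) = min x (bs a + sum bs N)" using insert by simp
  also have "\<dots> \<le> min x (bs a) + min x (sum bs N)" using nn insert by (auto simp: min_def)
  also have "\<dots> \<le> min x (bs a) + (\<Sum>s\<in>N. min x (bs s))" using IH by simp
  also have "\<dots> = (\<Sum>s\<in>insert a N. min x (bs s))" using insert by simp
  finally show ?case .
qed

lemma shape:
  fixes H F :: "real \<Rightarrow> real" and E :: "'s \<Rightarrow> real \<Rightarrow> real" and bs :: "'s \<Rightarrow> nat" and b :: nat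
  assumes fin: "finite N"
    and Hmono: "\<And>x y. x \<le> y \<Longrightarrow> H x \<le> H y" and H0: "H 0 = 0" and Hc: "continuous_on {0..1} H"
    and H1: "real b \<le> H 1"
    and Emono: "\<And>s x y. s \<in> N \<Longrightarrow> x \<le> y \<Longrightarrow> E s x \<le> E s y"
    and Enn: "\<And>s x. s \<in> N \<Longrightarrow> 0 \<le> x \<Longrightarrow> 0 \<le> E s x" and E0: "\<And>s. s \<in> N \<Longrightarrow> E s 0 = 0"
    and Fdef: "\<And>x. x \<in> {0..1} \<Longrightarrow> F x = H x - 2 * min (H x) b + (\<Sum>s\<in>N. min (min (H x) b + E s x) (bs s))"
  shows "\<forall>\<tau>\<in>{0..1}. min 0 (real (sum bs N) - real b) \<le> F \<tau>"
    and "\<exists>\<tau>\<in>{0..1}. F \<tau> = min 0 (real (sum bs N) - real b)"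
    and "propR F"
proof -
  define B where "B = real (sum bs N)"
  have Hnn: "0 \<le> H x" if "0 \<le> x" for x using Hmono[OF that] H0 by simp
  define S where "S = (\<lambda>x. (\<Sum>s\<in>N. min (min (H x) b + E s x) (bs s)))"
  have Sge: "min (min (H x) b) B \<le> S x" if "0 \<le> x" for x
  proof -
    have "min (min (H x) b) B \<le> (\<Sum>s\<in>N. min (min (H x) b) (bs s))"
      unfolding B_def of_nat_sum using sum_min_ge[OF fin, of "min (H x) b" "\<lambda>s. real (bs s)"] Hnn[OF that] by simp
    also have "\<dots> \<le> S x" unfolding S_def
    proof (rule sum_mono)
      fix s assume "s \<in> N"
      then have "0 \<le> E s x" using Enn that by blast
      then show "min (min (H x) (real b)) (real (bs s)) \<le> min (min (H x) (real b) + E s x) (real (bs s))"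
        by (simp add: min_def)
    qed
    finally show ?thesis .
  qed
  have Sle: "S x \<le> B" for x
    unfolding S_def B_def of_nat_sum by (rule sum_mono) simp
  have lbF: "min 0 (B - real b) \<le> F \<tau>" if "\<tau> \<in> {0..1}" for \<tau>
  proof -
    have t0: "0 \<le> \<tau>" using that by simp
    have "F \<tau> = H \<tau> - 2 * min (H \<tau>) b + S \<tau>" using Fdef[OF that] by (simp add: S_def)
    then show ?thesis using Sge[OF t0] by (auto simp: min_def split: if_splits)
  qed
  then show "\<forall>\<tau>\<in>{0..1}. min 0 (real (sum bs N) - real b) \<le> F \<tau>" by (simp add: B_def)
  have F0: "F 0 = 0" using Fdef[of 0] H0 E0 by simp
  show "\<exists>\<tau>\<in>{0..1}. F \<tau> = min 0 (real (sum bs N) - real b)"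
  proof (cases "real b \<le> B")
    case True
    then show ?thesis using F0 by (intro bexI[of _ 0]) (auto simp: B_def)
  next
    case False
    have i1: "H 0 \<le> real b" using H0 by simp
    have i3: "(0::real) \<le> 1" by simp
    from IVT'[of H 0 "real b" 1, OF i1 H1 i3 Hc] obtain \<tau>0 where t0: "0 \<le> \<tau>0" "\<tau>0 \<le> 1" "H \<tau>0 = real b" by blast
    have "F \<tau>0 = - real b + S \<tau>0" using Fdef[of \<tau>0] t0 by (simp add: S_def)
    then have "F \<tau>0 \<le> B - real b" using Sle[of \<tau>0] by simp
    moreover have "min 0 (B - real b) \<le> F \<tau>0" using lbF t0 by simp
    ultimately show ?thesis using False t0 by (intro bexI[of _ \<tau>0]) (auto simp: B_def)
  qed
  define cap where "cap = (\<lambda>x. \<forall>s\<in>N. real (bs s) \<le> H x + E s x)"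
  have Flow: "F x = - H x + (\<Sum>s\<in>N. min (H x + E s x) (bs s))" if "x \<in> {0..1}" "H x \<le> real b" for x
    using Fdef[OF that(1)] that(2) by (simp add: min_def)
  have Fhigh: "F x = H x - 2 * real b + (\<Sum>s\<in>N. min (real b + E s x) (bs s))" if "x \<in> {0..1}" "real b \<le> H x" for x
  proof -
    have "min (H x) (real b) = real b" using that(2) by simp
    then show ?thesis using Fdef[OF that(1)] by simp
  qed
  have capF: "F x = B - H x" if "x \<in> {0..1}" "H x \<le> real b" "cap x" for x
  proof -
    have "(\<Sum>s\<in>N. min (H x + E s x) (bs s)) = (\<Sum>s\<in>N. real (bs s))"
      by (rule sum.cong) (use that(3) in \<open>auto simp: cap_def min_def\<close>)
    then show ?thesis using Flow[OF that(1,2)] by (simp add: B_def)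
  qed
  have capmono: "cap y" if "x \<le> y" "cap x" for x y
    unfolding cap_def
  proof
    fix s assume s: "s \<in> N"
    have "real (bs s) \<le> H x + E s x" using that(2) s by (simp add: cap_def)
    also have "\<dots> \<le> H y + E s y" using Hmono[OF that(1)] Emono[OF s that(1)] by simp
    finally show "real (bs s) \<le> H y + E s y" .
  qed
  have fa: "F s1 \<le> F s2" if as: "0 \<le> s1" "s1 \<le> s2" "s2 \<le> 1" "H s2 \<le> real b" "\<not> cap s2" for s1 s2
  proof -
    obtain s0 where s0: "s0 \<in> N" "H s2 + E s0 s2 < real (bs s0)" using as(5) unfolding cap_def by force
    have H12: "H s1 \<le> H s2" using Hmono[OF as(2)] .
    define d where "d = (\<lambda>s. min (H s2 + E s s2) (real (bs s)) - min (H s1 + E s s1) (real (bs s)))"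
    have dnn: "0 \<le> d s" if "s \<in> N" for s
      using H12 Emono[OF that \<open>s1 \<le> s2\<close>] unfolding d_def by (auto simp: min_def)
    have ds0: "H s2 - H s1 \<le> d s0"
      using s0 Emono[OF s0(1) \<open>s1 \<le> s2\<close>] unfolding d_def by (auto simp: min_def)
    have "d s0 \<le> sum d N" by (rule member_le_sum[OF s0(1)]) (use dnn fin in auto)
    moreover have "F s2 - F s1 = - (H s2 - H s1) + sum d N"
    proof -
      have h1: "H s1 \<le> real b" using H12 as(4) by simp
      have "F s2 - F s1 = - H s2 + H s1 + ((\<Sum>s\<in>N. min (H s2 + E s s2) (bs s)) - (\<Sum>s\<in>N. min (H s1 + E s s1) (bs s)))"
        using Flow[of s2] Flow[of s1] that h1 by simp
      also have "\<dots> = - (H s2 - H s1) + sum d N" unfolding d_def by (simp add: sum_subtractf)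
      finally show ?thesis .
    qed
    ultimately show ?thesis using ds0 by simp
  qed
  have fb: "F s2 \<le> F s1" if as: "0 \<le> s1" "s1 \<le> s2" "s2 \<le> 1" "H s2 \<le> real b" "cap s1" for s1 s2
  proof -
    have "cap s2" using capmono that by blast
    have h1: "H s1 \<le> real b" using Hmono[OF as(2)] as(4) by simp
    have "F s2 = B - H s2" using capF[of s2] that \<open>cap s2\<close> by simp
    moreover have "F s1 = B - H s1" using capF[of s1] that h1 by simp
    ultimately show ?thesis using Hmono[OF as(2)] by simp
  qed
  have fc: "F s1 \<le> F s2" if as: "0 \<le> s1" "s1 \<le> s2" "s2 \<le> 1" "real b \<le> H s1" for s1 s2
  proof -
    have h2: "real b \<le> H s2" using Hmono[OF as(2)] as(4) by simp
    have "(\<Sum>s\<in>N. min (real b + E s s1) (bs s)) \<le> (\<Sum>s\<in>N. min (real b + E s s2) (bs s))"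
    proof (rule sum_mono)
      fix s assume "s \<in> N"
      then have "E s s1 \<le> E s s2" using Emono as(2) by blast
      then show "min (real b + E s s1) (real (bs s)) \<le> min (real b + E s s2) (real (bs s))" by (simp add: min_def)
    qed
    then show ?thesis using Fhigh[of s1] Fhigh[of s2] that h2 Hmono[OF as(2)] by simp
  qed
  show "propR F"
    unfolding propR_def
  proof (intro ballI allI impI)
    fix t k assume t: "t \<in> {0..1}" and h1: "\<forall>s\<in>{0..t}. of_int k - 1 < F s" and h2: "\<exists>s\<in>{0..t}. F s < of_int k"
    obtain s0 where s0: "s0 \<in> {0..t}" "F s0 < of_int k" using h2 by blast
    have "of_int k - 1 < F 0" using h1 t by simp
    then have k0: "k \<le> 0" using F0 by simp
    have Fs0: "F s0 < 0" using s0 k0 by linarith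
    have C0: "cap s0" if "H s0 \<le> real b"
    proof (rule ccontr)
      assume "\<not> cap s0"
      then have "F 0 \<le> F s0" using fa[of 0 s0] s0 t that by simp
      then show False using F0 Fs0 by simp
    qed
    show "F t < of_int k"
    proof (cases "real b \<le> H t")
      case True
      have i1: "H 0 \<le> real b" using H0 by simp
      have ct: "continuous_on {0..t} H" using continuous_on_subset[OF Hc, of "{0..t}"] t by auto
      have i3: "0 \<le> t" using t by simp
      from IVT'[of H 0 "real b" t, OF i1 True i3 ct] obtain \<tau>1 where t1: "0 \<le> \<tau>1" "\<tau>1 \<le> t" "H \<tau>1 = real b" by blast
      have "F \<tau>1 \<le> F s0"
      proof (cases "\<tau>1 \<le> s0")
        case True
        then show ?thesis using fc[of \<tau>1 s0] t1 s0 t by simp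
      next
        case False
        then have "H s0 \<le> real b" using Hmono[of s0 \<tau>1] t1 by simp
        then have "cap s0" by (rule C0)
        then show ?thesis using fb[of s0 \<tau>1] t1 s0 t False by simp
      qed
      then have Ft1: "F \<tau>1 < of_int k" using s0 by simp
      have "cap \<tau>1"
      proof (rule ccontr)
        assume "\<not> cap \<tau>1"
        then have "F 0 \<le> F \<tau>1" using fa[of 0 \<tau>1] t1 t by simp
        then show False using F0 Ft1 k0 by simp
      qed
      then have "F \<tau>1 = B - real b" using capF[of \<tau>1] t1 t by simp
      moreover have "of_int k - 1 < F \<tau>1" using h1 t1 by simp
      moreover have zB: "real_of_int (int (sum bs N) - int b) = B - real b" by (simp add: B_def)
      ultimately have "real_of_int (k - 1) < real_of_int (int (sum bs N) - int b)" and "real_of_int (int (sum bs N) - int b) < real_of_int k"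
        using Ft1 by simp_all
      then have "k - 1 < int (sum bs N) - int b" and "int (sum bs N) - int b < k" by (simp only: of_int_less_iff)+
      then show ?thesis by simp
    next
      case False
      have Hs0: "H s0 \<le> real b" using Hmono[of s0 t] s0 False by simp
      then have cs0: "cap s0" by (rule C0)
      have "F t \<le> F s0" using fb[of s0 t] s0 t False cs0 by simp
      then show ?thesis using s0 by simp
    qed
  qed
qed

lemma propR_nonneg: "(\<And>x. x \<in> {0..1} \<Longrightarrow> 0 \<le> F x) \<Longrightarrow> F 0 = 0 \<Longrightarrow> propR F"
  unfolding propR_def
proof (intro ballI allI impI)
  fix t k assume nn: "\<And>x. x \<in> {0..1} \<Longrightarrow> 0 \<le> F x" and F0: "F 0 = 0" and t: "t \<in> {0..1}"
    and h1: "\<forall>s\<in>{0..t}. of_int k - 1 < F s" and h2: "\<exists>s\<in>{0..t}. F s < of_int k"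
  have "of_int k - 1 < F 0" using h1 t by simp
  then have "k \<le> 0" using F0 by simp
  moreover obtain s where "s \<in> {0..t}" "F s < of_int k" using h2 by blast
  moreover have "0 \<le> F s" using nn[of s] \<open>s \<in> {0..t}\<close> t by simp
  ultimately show "F t < of_int k" by linarith
qed

locale mt_ctx =
  fixes A :: "'i \<Rightarrow> 'i \<Rightarrow> int" and alpha :: "'i \<Rightarrow> 'v::real_vector" and coroot :: "'i \<Rightarrow> 'v \<Rightarrow> real"
    and lam :: 'v and t :: nat and ii :: "nat \<Rightarrow> 'i" and b :: "nat \<Rightarrow> nat"
  assumes sl: "simply_laced A" and lin: "\<forall>i. linear (coroot i)"
    and cr: "\<forall>i j. coroot i (alpha j) = of_int (A i j)"
    and dl: "dominant_integral coroot lam" and inj: "inj_on ii {1..t}"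
begin

function G :: "nat \<Rightarrow> real \<Rightarrow> real" where
  "G s x = (if t < s then 0 else min (max (coroot (ii s) lam * x - (\<Sum>u\<in>{s<..t}. of_int (A (ii s) (ii u)) * G u x)) 0) (real (b s)))"
  by pat_completeness auto
termination by (relation "Wellfounded.measure (\<lambda>(s,x). Suc t - s)") auto

declare G.simps[simp del]

definition H :: "nat \<Rightarrow> real \<Rightarrow> real" where
  "H s x = coroot (ii s) lam * x - (\<Sum>u\<in>{s<..t}. of_int (A (ii s) (ii u)) * G u x)"

lemma G_eq: "s \<le> t \<Longrightarrow> G s x = min (max (H s x) 0) (real (b s))"
  by (subst G.simps) (simp add: H_def)
lemma G_gt: "t < s \<Longrightarrow> G s x = 0"
  by (subst G.simps) simp

lemma A_diag: "A i i = 2" using sl by (simp add: simply_laced_def)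
lemma A_off: "i \<noteq> j \<Longrightarrow> A i j = 0 \<or> A i j = -1" using sl by (simp add: simply_laced_def)
lemma A_sym: "A i j = A j i" using sl by (simp add: simply_laced_def)
lemma A_le: "i \<noteq> j \<Longrightarrow> A i j \<le> 0" using A_off[of i j] by auto
lemma ii_ne: "s \<in> {1..t} \<Longrightarrow> u \<in> {1..t} \<Longrightarrow> s \<noteq> u \<Longrightarrow> ii s \<noteq> ii u"
  using inj unfolding inj_on_def by blast
lemma lam_nn: "0 \<le> coroot i lam"
proof -
  have "coroot i lam \<in> \<nat>" using dl by (simp add: dominant_integral_def)
  then show ?thesis by (auto elim: Nats_cases)
qed
lemma lin_i: "linear (coroot i)" using lin by simp
lemma cr2: "coroot i (alpha i) = 2" using cr A_diag by simp

lemma G_nn: "0 \<le> G s x" by (cases "t < s") (simp_all add: G_eq G_gt)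
lemma G_le: "G s x \<le> real (b s)" by (cases "t < s") (simp_all add: G_eq G_gt)

lemma G_props: "1 \<le> s \<Longrightarrow> continuous_on UNIV (G s) \<and> mono (G s) \<and> G s 0 = 0"
proof (induction "Suc t - s" arbitrary: s rule: less_induct)
  case less
  show ?case
  proof (cases "t < s")
    case True
    have Geq: "G s = (\<lambda>x. 0)" by (rule ext) (simp add: G_gt True)
    have "mono (\<lambda>x::real. 0::real)" by (simp add: mono_def)
    then show ?thesis unfolding Geq by (simp add: continuous_on_const)
  next
    case False
    have IH: "continuous_on UNIV (G u) \<and> mono (G u) \<and> G u 0 = 0" if "u \<in> {s<..t}" for u
    proof -
      have "Suc t - u < Suc t - s" using that by auto
      moreover have "1 \<le> u" using that less.prems by auto
      ultimately show ?thesis using less.hyps[of u] by blast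
    qed
    have Hc: "continuous_on UNIV (H s)"
    proof -
      have "continuous_on UNIV (\<lambda>x. of_int (A (ii s) (ii u)) * G u x)" if "u \<in> {s<..t}" for u
        using IH[OF that] by (intro continuous_on_mult continuous_on_const) auto
      then have c2: "continuous_on UNIV (\<lambda>x. \<Sum>u\<in>{s<..t}. of_int (A (ii s) (ii u)) * G u x)"
        by (rule continuous_on_sum)
      have c1: "continuous_on UNIV (\<lambda>x. coroot (ii s) lam * x)"
        by (intro continuous_on_mult continuous_on_const continuous_on_id)
      show ?thesis unfolding H_def[abs_def] by (rule continuous_on_diff[OF c1 c2])
    qed
    have Hm: "mono (H s)"
    proof (rule monoI)
      fix x y :: real assume xy: "x \<le> y"
      have "coroot (ii s) lam * x \<le> coroot (ii s) lam * y" using lam_nn xy by (simp add: mult_left_mono)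
      moreover have "(\<Sum>u\<in>{s<..t}. of_int (A (ii s) (ii u)) * G u y) \<le> (\<Sum>u\<in>{s<..t}. of_int (A (ii s) (ii u)) * G u x)"
      proof (rule sum_mono)
        fix u assume u: "u \<in> {s<..t}"
        have "ii s \<noteq> ii u" using ii_ne[of s u] u less.prems False by auto
        then have "real_of_int (A (ii s) (ii u)) \<le> 0" using A_le by simp
        moreover have "G u x \<le> G u y" using IH[OF u] xy by (simp add: monoD)
        ultimately show "of_int (A (ii s) (ii u)) * G u y \<le> of_int (A (ii s) (ii u)) * G u x"
          by (simp add: mult_left_mono_neg)
      qed
      ultimately show "H s x \<le> H s y" unfolding H_def by simp
    qed
    have H0: "H s 0 = 0" unfolding H_def using IH by simp
    have Geq: "G s = (\<lambda>x. min (max (H s x) 0) (real (b s)))" using False by (auto simp: G_eq)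
    have c: "continuous_on UNIV (\<lambda>x. min (max (H s x) 0) (real (b s)))"
      by (intro continuous_on_min continuous_on_max Hc continuous_on_const)
    have m: "mono (\<lambda>x. min (max (H s x) 0) (real (b s)))"
    proof (rule monoI)
      fix x y :: real assume "x \<le> y"
      then have "H s x \<le> H s y" using Hm by (simp add: monoD)
      then show "min (max (H s x) 0) (real (b s)) \<le> min (max (H s y) 0) (real (b s))"
        by (intro min.mono max.mono) auto
    qed
    show ?thesis unfolding Geq using c m H0 by simp
  qed
qed

definition LC :: "'i \<Rightarrow> nat set \<Rightarrow> real \<Rightarrow> real" where
  "LC j U x = coroot j lam * x - (\<Sum>u\<in>U. of_int (A j (ii u)) * G u x)"

lemma LC_props:
  assumes U: "U \<subseteq> {1..t}" and Aneg: "\<forall>u\<in>U. A j (ii u) \<le> 0"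
  shows "continuous_on UNIV (LC j U) \<and> mono (LC j U) \<and> LC j U 0 = 0"
proof -
  have fin: "finite U" using U finite_subset by blast
  have IH: "continuous_on UNIV (G u) \<and> mono (G u) \<and> G u 0 = 0" if "u \<in> U" for u
    using G_props[of u] that U by auto
  have Hc: "continuous_on UNIV (LC j U)"
  proof -
    have "continuous_on UNIV (\<lambda>x. of_int (A j (ii u)) * G u x)" if "u \<in> U" for u
      using IH[OF that] by (intro continuous_on_mult continuous_on_const) auto
    then have c2: "continuous_on UNIV (\<lambda>x. \<Sum>u\<in>U. of_int (A j (ii u)) * G u x)"
      by (rule continuous_on_sum)
    have c1: "continuous_on UNIV (\<lambda>x. coroot j lam * x)"
      by (intro continuous_on_mult continuous_on_const continuous_on_id)
    show ?thesis unfolding LC_def[abs_def] by (rule continuous_on_diff[OF c1 c2])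
  qed
  have Hm: "mono (LC j U)"
  proof (rule monoI)
    fix x y :: real assume xy: "x \<le> y"
    have "coroot j lam * x \<le> coroot j lam * y" using lam_nn xy by (simp add: mult_left_mono)
    moreover have "(\<Sum>u\<in>U. of_int (A j (ii u)) * G u y) \<le> (\<Sum>u\<in>U. of_int (A j (ii u)) * G u x)"
    proof (rule sum_mono)
      fix u assume u: "u \<in> U"
      have "real_of_int (A j (ii u)) \<le> 0" using Aneg u by simp
      moreover have "G u x \<le> G u y" using IH[OF u] xy by (simp add: monoD)
      ultimately show "of_int (A j (ii u)) * G u y \<le> of_int (A j (ii u)) * G u x"
        by (simp add: mult_left_mono_neg)
    qed
    ultimately show "LC j U x \<le> LC j U y" unfolding LC_def by simp
  qed
  have H0: "LC j U 0 = 0" unfolding LC_def using IH by simp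
  show ?thesis using Hc Hm H0 by blast
qed

lemma LC_nn: "U \<subseteq> {1..t} \<Longrightarrow> \<forall>u\<in>U. A j (ii u) \<le> 0 \<Longrightarrow> 0 \<le> x \<Longrightarrow> 0 \<le> LC j U x"
  using LC_props[of U j] monoD[of "LC j U" 0 x] by auto

lemma H_LC: "1 \<le> s \<Longrightarrow> H s = LC (ii s) {s<..t}"
  by (rule ext) (simp add: H_def LC_def)

lemma H_props: "1 \<le> s \<Longrightarrow> continuous_on UNIV (H s) \<and> mono (H s) \<and> H s 0 = 0"
proof -
  assume s: "1 \<le> s"
  have "\<forall>u\<in>{s<..t}. A (ii s) (ii u) \<le> 0"
  proof
    fix u assume u: "u \<in> {s<..t}"
    show "A (ii s) (ii u) \<le> 0"
    proof (cases "s \<le> t")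
      case True
      then have "ii s \<noteq> ii u" using ii_ne[of s u] u s by auto
      then show ?thesis by (rule A_le)
    next
      case False then show ?thesis using u by auto
    qed
  qed
  moreover have "{s<..t} \<subseteq> {1..t}" using s by auto
  ultimately show ?thesis unfolding H_LC[OF s] using LC_props[of "{s<..t}" "ii s"] by blast
qed

definition pth :: "nat \<Rightarrow> real \<Rightarrow> 'v" where
  "pth r x = x *\<^sub>R lam - (\<Sum>s\<in>{r..t}. G s x *\<^sub>R alpha (ii s))"

lemma coroot_pth: "coroot j (pth r x) = coroot j lam * x - (\<Sum>s\<in>{r..t}. of_int (A j (ii s)) * G s x)"
  unfolding pth_def using cr by (simp add: lin_diff[OF lin_i] lin_sum[OF lin_i] lin_scale[OF lin_i] mult.commute)

lemma fold_struct:
  "1 \<le> r \<Longrightarrow> r \<le> Suc t \<Longrightarrow> foldr (\<lambda>r acc. (fop alpha coroot (ii r) ^^ b r) acc) [r..<Suc t] (Some (pi_hw lam))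
     = (if \<forall>s\<in>{r..t}. real (b s) \<le> H s 1 then Some (pth r) else None)"
proof (induction "Suc t - r" arbitrary: r)
  case 0
  then have r: "r = Suc t" by simp
  have "pi_hw lam = pth r" by (rule ext) (simp add: pi_hw_def pth_def r)
  then show ?case using r by simp
next
  case (Suc d)
  then have rt: "r \<le> t" and r1: "1 \<le> r" by auto
  have IH: "foldr (\<lambda>r acc. (fop alpha coroot (ii r) ^^ b r) acc) [Suc r..<Suc t] (Some (pi_hw lam))
     = (if \<forall>s\<in>{Suc r..t}. real (b s) \<le> H s 1 then Some (pth (Suc r)) else None)"
    using Suc.hyps(1)[of "Suc r"] Suc.hyps(2) rt by simp
  have up: "[r..<Suc t] = r # [Suc r..<Suc t]" using rt by (simp add: upt_conv_Cons)
  have iset: "{r..t} = insert r {Suc r..t}" using rt by auto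
  have condeq: "(\<forall>s\<in>{r..t}. real (b s) \<le> H s 1) \<longleftrightarrow> real (b r) \<le> H r 1 \<and> (\<forall>s\<in>{Suc r..t}. real (b s) \<le> H s 1)"
    unfolding iset by simp
  have fstep: "foldr (\<lambda>r acc. (fop alpha coroot (ii r) ^^ b r) acc) [r..<Suc t] (Some (pi_hw lam))
    = (fop alpha coroot (ii r) ^^ b r) (foldr (\<lambda>r acc. (fop alpha coroot (ii r) ^^ b r) acc) [Suc r..<Suc t] (Some (pi_hw lam)))"
    by (simp only: up foldr.simps comp_apply)
  show ?case
  proof (cases "\<forall>s\<in>{Suc r..t}. real (b s) \<le> H s 1")
    case False
    have nc: "\<not> (\<forall>s\<in>{r..t}. real (b s) \<le> H s 1)" using False condeq by blast
    show ?thesis unfolding fstep IH if_not_P[OF False] if_not_P[OF nc] by (simp add: fop_None_pow)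
  next
    case True
    have hr: "(\<lambda>\<tau>. coroot (ii r) (pth (Suc r) \<tau>)) = H r"
    proof (rule ext)
      fix x
      have "{Suc r..t} = {r<..t}" by auto
      then show "coroot (ii r) (pth (Suc r) x) = H r x" unfolding coroot_pth H_def by simp
    qed
    have hp: "continuous_on UNIV (H r) \<and> mono (H r) \<and> H r 0 = 0" using H_props[OF r1] .
    have fs: "(fop alpha coroot (ii r) ^^ b r) (Some (pth (Suc r))) = (if real (b r) \<le> coroot (ii r) (pth (Suc r) 1)
      then Some (\<lambda>\<tau>. pth (Suc r) \<tau> - min (max (coroot (ii r) (pth (Suc r) \<tau>)) 0) (real (b r)) *\<^sub>R alpha (ii r)) else None)"
    proof (rule f_step)
      show "linear (coroot (ii r))" by (rule lin_i)
      show "coroot (ii r) (alpha (ii r)) = 2" by (rule cr2)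
      show "mono (\<lambda>\<tau>. coroot (ii r) (pth (Suc r) \<tau>))" unfolding hr using hp by blast
      show "continuous_on {0..1} (\<lambda>\<tau>. coroot (ii r) (pth (Suc r) \<tau>))" unfolding hr
        using hp continuous_on_subset by blast
      show "coroot (ii r) (pth (Suc r) 0) = 0" using hp fun_cong[OF hr, of 0] by simp
    qed
    have peq: "(\<lambda>\<tau>. pth (Suc r) \<tau> - min (max (coroot (ii r) (pth (Suc r) \<tau>)) 0) (real (b r)) *\<^sub>R alpha (ii r)) = pth r"
    proof (rule ext)
      fix x
      have "min (max (coroot (ii r) (pth (Suc r) x)) 0) (real (b r)) = G r x"
        using fun_cong[OF hr, of x] G_eq[OF rt] by simp
      moreover have "pth r x = x *\<^sub>R lam - (G r x *\<^sub>R alpha (ii r) + (\<Sum>s\<in>{Suc r..t}. G s x *\<^sub>R alpha (ii s)))"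
        unfolding pth_def iset by simp
      ultimately show "pth (Suc r) x - min (max (coroot (ii r) (pth (Suc r) x)) 0) (real (b r)) *\<^sub>R alpha (ii r) = pth r x"
        unfolding pth_def by (simp add: algebra_simps)
    qed
    have "H r 1 = coroot (ii r) (pth (Suc r) 1)" using fun_cong[OF hr, of 1] by simp
    then show ?thesis unfolding fstep IH using True condeq fs peq by simp
  qed
qed

definition Nr :: "nat \<Rightarrow> nat set" where
  "Nr r = {s \<in> {1..<r}. A (ii r) (ii s) = -1}"

lemma Nr_fin: "finite (Nr r)" unfolding Nr_def by simp

lemma sumA_split:
  fixes g :: "nat \<Rightarrow> real"
  assumes r: "r \<in> {1..t}"
  shows "(\<Sum>s\<in>{1..<r}. of_int (A (ii r) (ii s)) * g s) = - (\<Sum>s\<in>Nr r. g s)"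
proof -
  have sub: "Nr r \<subseteq> {1..<r}" unfolding Nr_def by auto
  have "(\<Sum>s\<in>{1..<r}. of_int (A (ii r) (ii s)) * g s) = (\<Sum>s\<in>Nr r. of_int (A (ii r) (ii s)) * g s) + (\<Sum>s\<in>{1..<r} - Nr r. of_int (A (ii r) (ii s)) * g s)"
    using sum.subset_diff[OF sub, of "\<lambda>s. of_int (A (ii r) (ii s)) * g s"] by (simp add: add.commute)
  also have "(\<Sum>s\<in>{1..<r} - Nr r. of_int (A (ii r) (ii s)) * g s) = 0"
  proof (rule sum.neutral, rule ballI)
    fix s assume s: "s \<in> {1..<r} - Nr r"
    then have "ii r \<noteq> ii s" using ii_ne[of r s] r by auto
    then have "A (ii r) (ii s) = 0" using A_off[of "ii r" "ii s"] s unfolding Nr_def by auto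
    then show "of_int (A (ii r) (ii s)) * g s = 0" by simp
  qed
  also have "(\<Sum>s\<in>Nr r. of_int (A (ii r) (ii s)) * g s) = (\<Sum>s\<in>Nr r. - g s)"
    by (rule sum.cong) (auto simp: Nr_def)
  finally show ?thesis by (simp add: sum_negf)
qed

lemma G1_C1: "\<forall>s\<in>{1..t}. real (b s) \<le> H s 1 \<Longrightarrow> s \<in> {1..t} \<Longrightarrow> G s 1 = real (b s)"
proof -
  assume a: "\<forall>s\<in>{1..t}. real (b s) \<le> H s 1" and s: "s \<in> {1..t}"
  then have "real (b s) \<le> H s 1" by blast
  then show ?thesis using G_eq[of s 1] s by simp
qed

lemma G1_C2:
  assumes C2: "\<forall>s\<in>{1..t}. real (b s) \<le> coroot (ii s) lam - (\<Sum>u\<in>{s<..t}. of_int (A (ii s) (ii u)) * real (b u))"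
  shows "s \<in> {1..t} \<Longrightarrow> G s 1 = real (b s)"
proof (induction "Suc t - s" arbitrary: s rule: less_induct)
  case less
  have IH: "G u 1 = real (b u)" if "u \<in> {s<..t}" for u
  proof -
    have "Suc t - u < Suc t - s" "u \<in> {1..t}" using that less.prems by auto
    then show ?thesis using less.hyps[of u] by blast
  qed
  have "H s 1 = coroot (ii s) lam - (\<Sum>u\<in>{s<..t}. of_int (A (ii s) (ii u)) * real (b u))"
    unfolding H_def using IH by simp
  then have "real (b s) \<le> H s 1" using C2 less.prems by simp
  then show ?case using G_eq[of s 1] less.prems by simp
qed

lemma lam_equiv:
  "(\<forall>s\<in>{1..t}. real (b s) \<le> H s 1) \<longleftrightarrow>
   (\<forall>s\<in>{1..t}. real (b s) \<le> coroot (ii s) lam - (\<Sum>u\<in>{s<..t}. of_int (A (ii s) (ii u)) * real (b u)))"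
    (is "?L \<longleftrightarrow> ?R")
proof -
  have Heq: "H s 1 = coroot (ii s) lam - (\<Sum>u\<in>{s<..t}. of_int (A (ii s) (ii u)) * real (b u))"
    if "\<forall>u\<in>{1..t}. G u 1 = real (b u)" "s \<in> {1..t}" for s
  proof -
    have "\<forall>u\<in>{s<..t}. G u 1 = real (b u)" using that by auto
    then show ?thesis unfolding H_def by simp
  qed
  show ?thesis
  proof
    assume L: ?L
    then have "\<forall>u\<in>{1..t}. G u 1 = real (b u)" using G1_C1 by blast
    then show ?R using L Heq by simp
  next
    assume R: ?R
    then have "\<forall>u\<in>{1..t}. G u 1 = real (b u)" using G1_C2 by blast
    then show ?L using R Heq by simp
  qed
qed

lemma mu_out:
  assumes j: "j \<notin> ii ` {1..t}"
  shows "(eop alpha coroot j ^^ n) (Some (pth 1)) = None \<longleftrightarrow> 0 < n"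
proof -
  have Aneg: "\<forall>u\<in>{1..t}. A j (ii u) \<le> 0" using j A_le by auto
  have Feq: "(\<lambda>x. coroot j (pth 1 x)) = LC j {1..t}" by (rule ext) (simp add: coroot_pth LC_def)
  have P: "continuous_on UNIV (LC j {1..t}) \<and> mono (LC j {1..t}) \<and> LC j {1..t} 0 = 0"
    using LC_props[of "{1..t}" j] Aneg by simp
  have "(eop alpha coroot j ^^ n) (Some (pth 1)) = None \<longleftrightarrow> int n > - 0"
  proof (rule e_iter)
    show "linear (coroot j)" by (rule lin_i)
    show "coroot j (alpha j) = 2" by (rule cr2)
    show "continuous_on {0..1} (\<lambda>\<tau>. coroot j (pth 1 \<tau>))" unfolding Feq using P continuous_on_subset by blast
    show "coroot j (pth 1 0) = 0" using P fun_cong[OF Feq, of 0] by simp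
    show "\<forall>\<tau>\<in>{0..1}. real_of_int 0 \<le> coroot j (pth 1 \<tau>)"
    proof
      fix \<tau> :: real assume "\<tau> \<in> {0..1}"
      then have "0 \<le> LC j {1..t} \<tau>" using LC_nn[of "{1..t}" j \<tau>] Aneg by simp
      then show "real_of_int 0 \<le> coroot j (pth 1 \<tau>)" using fun_cong[OF Feq, of \<tau>] by simp
    qed
    show "\<exists>\<tau>\<in>{0..1}. coroot j (pth 1 \<tau>) = real_of_int 0" using P fun_cong[OF Feq, of 0] by (intro bexI[of _ 0]) auto
    show "propR (\<lambda>\<tau>. coroot j (pth 1 \<tau>))"
      unfolding Feq by (rule propR_nonneg) (use LC_nn[of "{1..t}" j] Aneg P in auto)
  qed
  then show ?thesis by simp
qed

lemma mu_in:
  assumes C1: "\<forall>s\<in>{1..t}. real (b s) \<le> H s 1" and r: "r \<in> {1..t}"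
  shows "(eop alpha coroot (ii r) ^^ n) (Some (pth 1)) = None \<longleftrightarrow> int n > - min 0 (int (sum b (Nr r)) - int (b r))"
proof -
  define F where "F = (\<lambda>x. coroot (ii r) (pth 1 x))"
  define E where "E = (\<lambda>s x. LC (ii s) ({s<..t} - {r}) x)"
  have r1: "1 \<le> r" "r \<le> t" using r by auto
  have HP: "continuous_on UNIV (H r) \<and> mono (H r) \<and> H r 0 = 0" using H_props[OF r1(1)] .
  have Hnn: "0 \<le> H s x" if "1 \<le> s" "0 \<le> x" for s x
    using H_props[OF that(1)] monoD[of "H s" 0 x] that(2) by auto
  have Eprops: "continuous_on UNIV (E s) \<and> mono (E s) \<and> E s 0 = 0 \<and> (\<forall>x. 0 \<le> x \<longrightarrow> 0 \<le> E s x)"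
    if s: "s \<in> Nr r" for s
  proof -
    have s1: "s \<in> {1..<r}" using s unfolding Nr_def by auto
    have U: "{s<..t} - {r} \<subseteq> {1..t}" using s1 by auto
    have Aneg: "\<forall>u\<in>{s<..t} - {r}. A (ii s) (ii u) \<le> 0"
    proof
      fix u assume u: "u \<in> {s<..t} - {r}"
      then have "ii s \<noteq> ii u" using ii_ne[of s u] s1 r1 by auto
      then show "A (ii s) (ii u) \<le> 0" by (rule A_le)
    qed
    have "E s = LC (ii s) ({s<..t} - {r})" unfolding E_def by (rule ext) simp
    then show ?thesis using LC_props[OF U Aneg] LC_nn[OF U Aneg] by simp
  qed
  have Gr: "G r x = min (H r x) (real (b r))" if "0 \<le> x" for x
    using G_eq[OF r1(2)] Hnn[OF r1(1) that] by simp
  have Gs: "G s x = min (min (H r x) (real (b r)) + E s x) (real (b s))" if s: "s \<in> Nr r" and x: "0 \<le> x" for s x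
  proof -
    have s1: "s \<in> {1..<r}" and Asr: "A (ii r) (ii s) = -1" using s unfolding Nr_def by auto
    have st: "s \<le> t" using s1 r1 by auto
    have "G s x = min (H s x) (real (b s))" using G_eq[OF st] Hnn[of s x] s1 x by simp
    moreover have "H s x = G r x + E s x"
    proof -
      have rin: "r \<in> {s<..t}" using s1 r1 by auto
      have "(\<Sum>u\<in>{s<..t}. of_int (A (ii s) (ii u)) * G u x) = of_int (A (ii s) (ii r)) * G r x + (\<Sum>u\<in>{s<..t} - {r}. of_int (A (ii s) (ii u)) * G u x)"
        using sum.remove[OF _ rin, of "\<lambda>u. of_int (A (ii s) (ii u)) * G u x"] by simp
      moreover have "A (ii s) (ii r) = -1" using Asr A_sym by simp
      ultimately show ?thesis unfolding H_def E_def LC_def by simp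
    qed
    ultimately show ?thesis using Gr[OF x] by simp
  qed
  have Fdef: "F x = H r x - 2 * min (H r x) (real (b r)) + (\<Sum>s\<in>Nr r. min (min (H r x) (real (b r)) + E s x) (real (b s)))"
    if x: "x \<in> {0..1}" for x
  proof -
    define f where "f = (\<lambda>s. of_int (A (ii r) (ii s)) * G s x)"
    have eqs: "{1..t} = {1..<r} \<union> insert r {r<..t}" using r1 by auto
    have "sum f {1..t} = sum f {1..<r} + sum f (insert r {r<..t})" unfolding eqs by (rule sum.union_disjoint) auto
    also have "sum f (insert r {r<..t}) = f r + sum f {r<..t}" by simp
    finally have spl: "sum f {1..t} = sum f {1..<r} + f r + sum f {r<..t}" by simp
    have "sum f {1..<r} = - (\<Sum>s\<in>Nr r. G s x)" unfolding f_def by (rule sumA_split[OF r])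
    also have "\<dots> = - (\<Sum>s\<in>Nr r. min (min (H r x) (real (b r)) + E s x) (real (b s)))"
      using Gs x by simp
    finally have s1: "sum f {1..<r} = - (\<Sum>s\<in>Nr r. min (min (H r x) (real (b r)) + E s x) (real (b s)))" .
    have s2: "f r = 2 * min (H r x) (real (b r))" unfolding f_def using A_diag Gr x by simp
    have "F x = coroot (ii r) lam * x - sum f {1..t}" unfolding F_def f_def by (simp add: coroot_pth)
    also have "\<dots> = H r x - f r - sum f {1..<r}" by (simp only: spl) (simp add: H_def f_def)
    finally show ?thesis using s1 s2 by simp
  qed
  have H1: "real (b r) \<le> H r 1" using C1 r by blast
  have hm: "\<And>x y. x \<le> y \<Longrightarrow> H r x \<le> H r y" using HP by (simp add: monoD)
  have h0: "H r 0 = 0" using HP by blast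
  have hc: "continuous_on {0..1} (H r)" using HP continuous_on_subset by blast
  have em: "\<And>s x y. s \<in> Nr r \<Longrightarrow> x \<le> y \<Longrightarrow> E s x \<le> E s y"
  proof -
    fix s and x y :: real assume "s \<in> Nr r" "x \<le> y"
    then show "E s x \<le> E s y" using Eprops[of s] by (simp add: monoD)
  qed
  have en: "\<And>s x. s \<in> Nr r \<Longrightarrow> 0 \<le> x \<Longrightarrow> 0 \<le> E s x" using Eprops by blast
  have e0: "\<And>s. s \<in> Nr r \<Longrightarrow> E s 0 = 0" using Eprops by blast
  note sh = shape[where H="H r" and E=E and N="Nr r" and bs=b and b="b r" and F=F, OF Nr_fin hm h0 hc H1 em en e0 Fdef]
  have Fc: "continuous_on {0..1} F"
  proof -
    have "continuous_on UNIV (\<lambda>x. of_int (A (ii r) (ii s)) * G s x)" if "s \<in> {1..t}" for s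
      using G_props[of s] that by (intro continuous_on_mult continuous_on_const) auto
    then have c2: "continuous_on UNIV (\<lambda>x. \<Sum>s\<in>{1..t}. of_int (A (ii r) (ii s)) * G s x)"
      by (rule continuous_on_sum)
    have c1: "continuous_on UNIV (\<lambda>x. coroot (ii r) lam * x)"
      by (intro continuous_on_mult continuous_on_const continuous_on_id)
    have "continuous_on UNIV F" unfolding F_def coroot_pth by (rule continuous_on_diff[OF c1 c2])
    then show ?thesis using continuous_on_subset by blast
  qed
  have F0: "F 0 = 0" unfolding F_def coroot_pth using G_props by simp
  have mconv: "real_of_int (min 0 (int (sum b (Nr r)) - int (b r))) = min 0 (real (sum b (Nr r)) - real (b r))"
    by (simp only: of_int_min of_int_0 of_int_diff of_int_of_nat_eq)
  show ?thesis
  proof (rule e_iter)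
    show "linear (coroot (ii r))" by (rule lin_i)
    show "coroot (ii r) (alpha (ii r)) = 2" by (rule cr2)
    show "continuous_on {0..1} (\<lambda>\<tau>. coroot (ii r) (pth 1 \<tau>))" using Fc unfolding F_def .
    show "coroot (ii r) (pth 1 0) = 0" using F0 unfolding F_def .
    show "\<forall>\<tau>\<in>{0..1}. real_of_int (min 0 (int (sum b (Nr r)) - int (b r))) \<le> coroot (ii r) (pth 1 \<tau>)"
      using sh(1) unfolding mconv F_def .
    show "\<exists>\<tau>\<in>{0..1}. coroot (ii r) (pth 1 \<tau>) = real_of_int (min 0 (int (sum b (Nr r)) - int (b r)))"
      using sh(2) unfolding mconv F_def .
    show "propR (\<lambda>\<tau>. coroot (ii r) (pth 1 \<tau>))" using sh(3) unfolding F_def .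
  qed
qed

end

lemma arith1: "(int (k + 1) > - min 0 (int B - int b)) \<longleftrightarrow> (real b - real B \<le> real k)"
proof -
  have "(int (k + 1) > - min 0 (int B - int b)) \<longleftrightarrow> int b - int B \<le> int k" by (auto simp: min_def)
  also have "\<dots> \<longleftrightarrow> real_of_int (int b - int B) \<le> real_of_int (int k)" by (simp only: of_int_le_iff)
  also have "\<dots> \<longleftrightarrow> real b - real B \<le> real k" by simp
  finally show ?thesis .
qed

lemma nat_floor_eq: "x \<in> \<nat> \<Longrightarrow> x = real (nat \<lfloor>x\<rfloor>)"
  by (auto elim: Nats_cases)

theorem mainTheorem5:
  fixes A :: "'i::finite \<Rightarrow> 'i \<Rightarrow> int"
    and alpha :: "'i \<Rightarrow> 'v::real_vector"
    and coroot :: "'i \<Rightarrow> 'v \<Rightarrow> real"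
    and lam mu :: 'v
    and t :: nat and ii :: "nat \<Rightarrow> 'i" and b :: "nat \<Rightarrow> nat"
  assumes "simply_laced A"
    and "\<forall>i. linear (coroot i)"
    and "\<forall>i j. coroot i (alpha j) = of_int (A i j)"
    and "dominant_integral coroot lam"
    and "dominant_integral coroot mu"
    and "t \<ge> 1"
    and "inj_on ii {1..t}"
  shows "(monomial alpha coroot ii b t lam \<noteq> None \<and>
          mu_dominant alpha coroot mu (monomial alpha coroot ii b t lam))
     \<longleftrightarrow> (coroot (ii t) lam \<ge> real (b t) \<and> coroot (ii 1) mu \<ge> real (b 1) \<and>
          (\<forall>r\<in>{2..t}. coroot (ii r) mu \<ge> real (b r) + (\<Sum>s\<in>{1..<r}. real (b s) * of_int (A (ii s) (ii r)))) \<and>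
          (\<forall>r\<in>{1..<t}. coroot (ii r) lam \<ge> real (b r) + (\<Sum>s\<in>{r<..t}. real (b s) * of_int (A (ii s) (ii r)))))"
proof -
  interpret M: mt_ctx A alpha coroot lam t ii b
    using assms by unfold_locales auto
  have t1: "1 \<le> t" using assms(6) .
  have mono_eq: "monomial alpha coroot ii b t lam = (if \<forall>s\<in>{1..t}. real (b s) \<le> M.H s 1 then Some (M.pth 1) else None)"
    unfolding monomial_def using M.fold_struct[of 1] by simp
  define C2 where "C2 = (\<forall>s\<in>{1..t}. real (b s) \<le> coroot (ii s) lam - (\<Sum>u\<in>{s<..t}. of_int (A (ii s) (ii u)) * real (b u)))"
  have symsum: "(\<Sum>u\<in>U. of_int (A (ii s) (ii u)) * real (b u)) = (\<Sum>u\<in>U. real (b u) * of_int (A (ii u) (ii s)))" for s U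
    by (rule sum.cong) (auto simp: M.A_sym[of "ii s"])
  have lamC: "C2 \<longleftrightarrow> (coroot (ii t) lam \<ge> real (b t) \<and>
          (\<forall>r\<in>{1..<t}. coroot (ii r) lam \<ge> real (b r) + (\<Sum>s\<in>{r<..t}. real (b s) * of_int (A (ii s) (ii r)))))"
  proof -
    have eqs: "{1..t} = insert t {1..<t}" using t1 by auto
    have "C2 \<longleftrightarrow> (\<forall>s\<in>{1..t}. coroot (ii s) lam \<ge> real (b s) + (\<Sum>u\<in>{s<..t}. real (b u) * of_int (A (ii u) (ii s))))"
      unfolding C2_def symsum by (auto simp: algebra_simps)
    also have "\<dots> \<longleftrightarrow> (coroot (ii t) lam \<ge> real (b t) \<and>
          (\<forall>r\<in>{1..<t}. coroot (ii r) lam \<ge> real (b r) + (\<Sum>s\<in>{r<..t}. real (b s) * of_int (A (ii s) (ii r)))))"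
      unfolding eqs by simp
    finally show ?thesis .
  qed
  have muC: "(coroot (ii 1) mu \<ge> real (b 1) \<and>
          (\<forall>r\<in>{2..t}. coroot (ii r) mu \<ge> real (b r) + (\<Sum>s\<in>{1..<r}. real (b s) * of_int (A (ii s) (ii r)))))
     \<longleftrightarrow> (\<forall>r\<in>{1..t}. real (b r) - real (sum b (M.Nr r)) \<le> coroot (ii r) mu)"
  proof -
    have ss: "(\<Sum>s\<in>{1..<r}. real (b s) * of_int (A (ii s) (ii r))) = - real (sum b (M.Nr r))" if "r \<in> {1..t}" for r
    proof -
      have "(\<Sum>s\<in>{1..<r}. real (b s) * of_int (A (ii s) (ii r))) = (\<Sum>s\<in>{1..<r}. of_int (A (ii r) (ii s)) * real (b s))"
        by (rule sum.cong) (auto simp: M.A_sym[of "ii r"])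
      also have "\<dots> = - (\<Sum>s\<in>M.Nr r. real (b s))" by (rule M.sumA_split[OF that])
      finally show ?thesis by simp
    qed
    have eqs: "{1..t} = insert 1 {2..t}" using t1 by auto
    have "(\<forall>r\<in>{1..t}. real (b r) - real (sum b (M.Nr r)) \<le> coroot (ii r) mu) \<longleftrightarrow>
          (\<forall>r\<in>{1..t}. coroot (ii r) mu \<ge> real (b r) + (\<Sum>s\<in>{1..<r}. real (b s) * of_int (A (ii s) (ii r))))"
      using ss by auto
    also have "\<dots> \<longleftrightarrow> (coroot (ii 1) mu \<ge> real (b 1) \<and>
          (\<forall>r\<in>{2..t}. coroot (ii r) mu \<ge> real (b r) + (\<Sum>s\<in>{1..<r}. real (b s) * of_int (A (ii s) (ii r)))))"
      unfolding eqs by simp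
    finally show ?thesis by simp
  qed
  have mud: "mu_dominant alpha coroot mu (Some (M.pth 1)) \<longleftrightarrow> (\<forall>r\<in>{1..t}. real (b r) - real (sum b (M.Nr r)) \<le> coroot (ii r) mu)"
    if C1: "\<forall>s\<in>{1..t}. real (b s) \<le> M.H s 1"
  proof -
    have mnat: "coroot j mu = real (nat \<lfloor>coroot j mu\<rfloor>)" for j
      using assms(5) nat_floor_eq unfolding dominant_integral_def by blast
    have inr: "(eop alpha coroot (ii r) ^^ (nat \<lfloor>coroot (ii r) mu\<rfloor> + 1)) (Some (M.pth 1)) = None
        \<longleftrightarrow> real (b r) - real (sum b (M.Nr r)) \<le> coroot (ii r) mu" if r: "r \<in> {1..t}" for r
      unfolding M.mu_in[OF C1 r] arith1 using mnat[of "ii r"] by simp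
    have outr: "(eop alpha coroot j ^^ (nat \<lfloor>coroot j mu\<rfloor> + 1)) (Some (M.pth 1)) = None" if "j \<notin> ii ` {1..t}" for j
      using M.mu_out[OF that, of "nat \<lfloor>coroot j mu\<rfloor> + 1"] by (simp del: funpow.simps)
    show ?thesis
    proof
      assume "mu_dominant alpha coroot mu (Some (M.pth 1))"
      then show "\<forall>r\<in>{1..t}. real (b r) - real (sum b (M.Nr r)) \<le> coroot (ii r) mu"
        unfolding mu_dominant_def using inr by blast
    next
      assume R: "\<forall>r\<in>{1..t}. real (b r) - real (sum b (M.Nr r)) \<le> coroot (ii r) mu"
      show "mu_dominant alpha coroot mu (Some (M.pth 1))"
        unfolding mu_dominant_def
      proof
        fix j
        show "(eop alpha coroot j ^^ (nat \<lfloor>coroot j mu\<rfloor> + 1)) (Some (M.pth 1)) = None"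
        proof (cases "j \<in> ii ` {1..t}")
          case True
          then obtain r where r: "r \<in> {1..t}" "j = ii r" by blast
          have "real (b r) - real (sum b (M.Nr r)) \<le> coroot (ii r) mu" using R r(1) by blast
          then show ?thesis unfolding r(2) using inr[OF r(1)] by blast
        next
          case False
          then show ?thesis by (rule outr)
        qed
      qed
    qed
  qed
  show ?thesis
  proof (cases "\<forall>s\<in>{1..t}. real (b s) \<le> M.H s 1")
    case True
    have "C2" using True M.lam_equiv unfolding C2_def by blast
    then show ?thesis unfolding mono_eq if_P[OF True] using mud[OF True] lamC muC by auto
  next
    case False
    have "\<not> C2" using False M.lam_equiv unfolding C2_def by blast
    then show ?thesis unfolding mono_eq if_not_P[OF False] using lamC by auto
  qed
qed

end
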